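(* Consider the sovereign default economy described in the context, with lenders' constant (non-stochastic) per-period endowment $\bar z = z$, and suppose $\{c^{\ast},c^{L,\ast},B^{\ast},b^{\ast},m_R^{\ast},m_A^{\ast},\delta^{\ast}\}$, $\{V_R^{\ast},V_A^{\ast},W_R^{\ast},W_A^{\ast}\}$, a perceived law of motion $\Gamma$ and a price function $q$ form a recursive equilibrium of this economy. Then for any other constant lenders' endowment $\hat z \neq z$, there exists a recursive equilibrium of the economy with $\bar z=\hat z$ (all other primitives unchanged) having the identical bond price function $q$ and identical borrower allocations (consumption $c^{\ast}$, bond policy $B^{\ast}$ and default decisions $\delta^{\ast}$).
   Context: Time is discrete. Let $(Y_t)$ be a Markov chain on a finite set $\mathbb{Y}\subseteq\mathbb{R}_+$ with transition matrix $P_{Y'|Y}$, and let $(X_t)$ be i.i.d. on $\mathbb{X}=[\underline x,\bar x]$ with a Lebesgue density, independent of $(Y_t)$; $W_t=(X_t,Y_t)\in\mathbb{W}=\mathbb{X}\times\mathbb{Y}$ and the borrower's endowment at $t$ is $y_t+x_t$. $E_Y[\cdot\mid y]$ and $E_X[\cdot]$ denote expectations under $P_{Y'|Y}(\cdot\mid y)$ and under the law of $X$. A long-term bond is traded: each period a fraction $\lambda\in(0,1]$ matures and a coupon $\psi$ is paid on the remaining fraction $1-\lambda$. Bond holdings lie in a bounded set $\mathbb{B}\subseteq\mathbb{R}$. A price function is $q:\mathbb{Y}\times\mathbb{B}\to\mathbb{R}_+$. Borrower: period utility $u$ strictly increasing, strictly concave, satisfying Inada conditions; discount factor $\beta\in(0,1)$;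 re-entry probability $\pi\in(0,1)$; output cost $\phi:\mathbb{Y}\to\mathbb{Y}$ with $\phi(y)\le y$. Values: $V(w,B)=\max\{V_A(\underline x,y),V_R(w,B)\}$; $V_R(w,B)=\max_{B'\in\mathbb{B}}\{u(c)+\beta E[V(W',B')\mid w]\}$ with $c=y+x-q(y,B')(B'-(1-\lambda)B)+(\lambda+(1-\lambda)\psi)B$; $V_A(w)=u(y+x-\phi(y))+\beta E[(1-\pi)V_A(W')+\pi V(W',0)\mid w]$; default indicator $\delta(w,B)=\mathbf{1}\{V_R(w,B)\ge V_A(\underline x,y)\}$ (1 = repay). Lenders (a continuum of measure one, atomistic, price takers): discount factor $\gamma\in(0,1)$, robustness parameter $\theta\in(\underline\theta,+\infty]$, constant endowment $\bar z$. Let $\mathcal{M}=\{g:\mathbb{Y}\to\mathbb{R}_+:\sum_{y'}g(y')P_{Y'|Y}(y'\mid y)=1\ \forall y\}$ and, for $g\in\mathcal M$, $\mathcal{E}[g](y)=E_Y[g(Y')\log g(Y')\mid y]$. Given a perceived law of motion $\Gamma:\mathbb{W}\times\mathbb{B}\to\mathbb{B}$ for aggregate debt, $W_R(w,B,b)=\min_{m\in\mathcal M}\max_{c^L,b'}\{c^L+\theta\gamma\mathcal E[m](y)+\gamma E_Y[m(Y')\mathcal W(Y',B',b')\mid y]\}$ subject to $c^L=\bar z+q(y,B')(b'-(1-\lambda)b)-(\lambda+(1-\lambda)\psi)b$ and $B'=\Gamma(w,B)$, where $\mathcal W(y',B',b')=E_X[W(y',X',B',b')]$ and $W(w',B',b')=\delta(w',B')W_R(w',B',b')+(1-\delta(w',B'))W_A(y')$;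 and $W_A(y)=\min_{m\in\mathcal M}\{\bar z+\theta\gamma\mathcal E[m](y)+\gamma E_Y[m(Y')((1-\pi)W_A(Y')+\pi\mathcal W(Y',0,0))\mid y]\}$. A recursive equilibrium is a collection of policy functions (borrower consumption $c^{\ast}$ and bonds $B^{\ast}:\mathbb W\times\mathbb B\to\mathbb B$, lender consumption $c^{L,\ast}$ and bonds $b^{\ast}:\mathbb W\times\mathbb B^2\to\mathbb B$, distortions $m_R^{\ast}:\mathbb W\times\mathbb B^2\to\mathcal M$, $m_A^{\ast}:\mathbb Y\to\mathcal M$, default decisions $\delta^{\ast}:\mathbb W\times\mathbb B\to\{0,1\}$), value functions $V_R^{\ast},V_A^{\ast},W_R^{\ast},W_A^{\ast}$, a perceived law of motion $\Gamma$ and a price function $q$ such that: (1) the policies, distortions and values solve the borrower's and individual lender's problems above; (2) markets clear: $B^{\ast}(w,B)=b^{\ast}(w,B,B)$ for all $(w,B)$; (3) $B^{\ast}(w,B)=\Gamma(w,B)$ for all $(w,B)$. *)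

theory Defs
  imports "HOL-Analysis.Analysis" "HOL-Probability.Probability"
begin

(* Primitives of the sovereign default economy.
   States: w = (x, y) :: real * real.  Bond holdings: real. *)
record economy =
  Ys    :: "real set"
  P     :: "real \<Rightarrow> real \<Rightarrow> real"  (* P y y' = P_{Y'|Y}(y' | y) *)
  xlo   :: real
  xhi   :: real
  fX    :: "real \<Rightarrow> real"
  lam   :: real
  psi   :: real
  Bs    :: "real set"
  u     :: "real \<Rightarrow> real"
  beta  :: real
  pii   :: real
  phi   :: "real \<Rightarrow> real"
  gam   :: real
  theta :: ereal
  theta_low :: real
  zbar  :: real

definition MX :: "economy \<Rightarrow> real measure" where
  "MX e = density lborel (\<lambda>x. ennreal (fX e x))"

definition Wset :: "economy \<Rightarrow> (real \<times> real) set" where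
  "Wset e = {xlo e..xhi e} \<times> Ys e"

definition strictly_concave_on :: "real set \<Rightarrow> (real \<Rightarrow> real) \<Rightarrow> bool" where
  "strictly_concave_on S f \<longleftrightarrow> (\<forall>x\<in>S. \<forall>y\<in>S. \<forall>t. x \<noteq> y \<and> 0 < t \<and> t < 1 \<longrightarrow>
      f ((1 - t) * x + t * y) > (1 - t) * f x + t * f y)"

definition economy_ok :: "economy \<Rightarrow> bool" where
  "economy_ok e \<longleftrightarrow>
     finite (Ys e) \<and> Ys e \<noteq> {} \<and> Ys e \<subseteq> {0..} \<and>
     (\<forall>y\<in>Ys e. \<forall>y'\<in>Ys e. P e y y' \<ge> 0) \<and>
     (\<forall>y\<in>Ys e. (\<Sum>y'\<in>Ys e. P e y y') = 1) \<and>
     xlo e < xhi e \<and>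
     fX e \<in> borel_measurable borel \<and> (\<forall>x. fX e x \<ge> 0) \<and>
     (\<forall>x. x \<notin> {xlo e..xhi e} \<longrightarrow> fX e x = 0) \<and> prob_space (MX e) \<and>
     0 < lam e \<and> lam e \<le> 1 \<and>
     bounded (Bs e) \<and>
     strict_mono_on {0<..} (u e) \<and> strictly_concave_on {0<..} (u e) \<and>
     (\<forall>c>0. u e differentiable at c) \<and>
     filterlim (deriv (u e)) at_top (at_right 0) \<and>
     ((deriv (u e)) \<longlongrightarrow> 0) at_top \<and>
     0 < beta e \<and> beta e < 1 \<and> 0 < pii e \<and> pii e < 1 \<and>
     (\<forall>y\<in>Ys e. phi e y \<in> Ys e \<and> phi e y \<le> y) \<and>
     0 < gam e \<and> gam e < 1 \<and> ereal (theta_low e) < theta e"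

definition ExpY :: "economy \<Rightarrow> (real \<Rightarrow> real) \<Rightarrow> real \<Rightarrow> real" where
  "ExpY e f y = (\<Sum>y'\<in>Ys e. P e y y' * f y')"

definition ExpX :: "economy \<Rightarrow> (real \<Rightarrow> real) \<Rightarrow> real" where
  "ExpX e f = integral\<^sup>L (MX e) f"

(* E[ f(W') | w ] with W' = (X', Y'), X' independent of Y' *)
definition condE :: "economy \<Rightarrow> (real \<times> real \<Rightarrow> real) \<Rightarrow> real \<times> real \<Rightarrow> real" where
  "condE e f w = ExpY e (\<lambda>y'. ExpX e (\<lambda>x. f (x, y'))) (snd w)"

definition Ment :: "economy \<Rightarrow> (real \<Rightarrow> real) set" where
  "Ment e = {g. (\<forall>y'\<in>Ys e. g y' \<ge> 0) \<and> (\<forall>y\<in>Ys e. (\<Sum>y'\<in>Ys e. g y' * P e y y') = 1)}"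

(* relative entropy E_Y[g log g | y]  (note 0 * ln 0 = 0) *)
definition ent :: "economy \<Rightarrow> (real \<Rightarrow> real) \<Rightarrow> real \<Rightarrow> real" where
  "ent e g y = ExpY e (\<lambda>y'. g y' * ln (g y')) y"

definition Vfun :: "economy \<Rightarrow> (real \<times> real \<Rightarrow> real \<Rightarrow> real) \<Rightarrow> (real \<times> real \<Rightarrow> real)
                     \<Rightarrow> real \<times> real \<Rightarrow> real \<Rightarrow> real" where
  "Vfun e VR VA w B = max (VA (xlo e, snd w)) (VR w B)"

definition cons :: "economy \<Rightarrow> (real \<Rightarrow> real \<Rightarrow> real) \<Rightarrow> real \<times> real \<Rightarrow> real \<Rightarrow> real \<Rightarrow> real" where
  "cons e q w B B' = snd w + fst w - q (snd w) B' * (B' - (1 - lam e) * B)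
                     + (lam e + (1 - lam e) * psi e) * B"

definition consL :: "economy \<Rightarrow> (real \<Rightarrow> real \<Rightarrow> real) \<Rightarrow> (real \<times> real \<Rightarrow> real \<Rightarrow> real)
                      \<Rightarrow> real \<times> real \<Rightarrow> real \<Rightarrow> real \<Rightarrow> real \<Rightarrow> real" where
  "consL e q Gam w B b b' = zbar e + q (snd w) (Gam w B) * (b' - (1 - lam e) * b)
                             - (lam e + (1 - lam e) * psi e) * b"

definition Wfun :: "(real \<times> real \<Rightarrow> real \<Rightarrow> real) \<Rightarrow> (real \<times> real \<Rightarrow> real \<Rightarrow> real \<Rightarrow> real)
                     \<Rightarrow> (real \<Rightarrow> real) \<Rightarrow> real \<times> real \<Rightarrow> real \<Rightarrow> real \<Rightarrow> real" where
  "Wfun ds WR WA w' B' b' = ds w' B' * WR w' B' b' + (1 - ds w' B') * WA (snd w')"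

definition calW :: "economy \<Rightarrow> (real \<times> real \<Rightarrow> real \<Rightarrow> real) \<Rightarrow> (real \<times> real \<Rightarrow> real \<Rightarrow> real \<Rightarrow> real)
                     \<Rightarrow> (real \<Rightarrow> real) \<Rightarrow> real \<Rightarrow> real \<Rightarrow> real \<Rightarrow> real" where
  "calW e ds WR WA y' B' b' = ExpX e (\<lambda>x. Wfun ds WR WA (x, y') B' b')"

definition JR :: "economy \<Rightarrow> (real \<Rightarrow> real \<Rightarrow> real) \<Rightarrow> (real \<times> real \<Rightarrow> real \<Rightarrow> real)
                   \<Rightarrow> (real \<times> real \<Rightarrow> real \<Rightarrow> real) \<Rightarrow> (real \<times> real \<Rightarrow> real \<Rightarrow> real \<Rightarrow> real)
                   \<Rightarrow> (real \<Rightarrow> real) \<Rightarrow> real \<times> real \<Rightarrow> real \<Rightarrow> real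
                   \<Rightarrow> (real \<Rightarrow> real) \<Rightarrow> real \<Rightarrow> ereal" where
  "JR e q Gam ds WR WA w B b m b' =
     ereal (consL e q Gam w B b b')
     + theta e * ereal (gam e * ent e m (snd w))
     + ereal (gam e * ExpY e (\<lambda>y'. m y' * calW e ds WR WA y' (Gam w B) b') (snd w))"

definition JA :: "economy \<Rightarrow> (real \<times> real \<Rightarrow> real \<Rightarrow> real)
                   \<Rightarrow> (real \<times> real \<Rightarrow> real \<Rightarrow> real \<Rightarrow> real) \<Rightarrow> (real \<Rightarrow> real)
                   \<Rightarrow> real \<Rightarrow> (real \<Rightarrow> real) \<Rightarrow> ereal" where
  "JA e ds WR WA y m =
     ereal (zbar e)
     + theta e * ereal (gam e * ent e m y)
     + ereal (gam e * ExpY e (\<lambda>y'. m y' * ((1 - pii e) * WA y' + pii e * calW e ds WR WA y' 0 0)) y)"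

definition recursive_equilibrium ::
  "economy \<Rightarrow> (real \<Rightarrow> real \<Rightarrow> real)                       \<comment> \<open>q\<close>
   \<Rightarrow> (real \<times> real \<Rightarrow> real \<Rightarrow> real)                          \<comment> \<open>c*\<close>
   \<Rightarrow> (real \<times> real \<Rightarrow> real \<Rightarrow> real)                          \<comment> \<open>B*\<close>
   \<Rightarrow> (real \<times> real \<Rightarrow> real \<Rightarrow> real \<Rightarrow> real)                  \<comment> \<open>c^{L,*}\<close>
   \<Rightarrow> (real \<times> real \<Rightarrow> real \<Rightarrow> real \<Rightarrow> real)                  \<comment> \<open>b*\<close>
   \<Rightarrow> (real \<times> real \<Rightarrow> real \<Rightarrow> real \<Rightarrow> (real \<Rightarrow> real))        \<comment> \<open>m_R*\<close>
   \<Rightarrow> (real \<Rightarrow> (real \<Rightarrow> real))                               \<comment> \<open>m_A*\<close>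
   \<Rightarrow> (real \<times> real \<Rightarrow> real \<Rightarrow> real)                          \<comment> \<open>delta*\<close>
   \<Rightarrow> (real \<times> real \<Rightarrow> real \<Rightarrow> real)                          \<comment> \<open>V_R*\<close>
   \<Rightarrow> (real \<times> real \<Rightarrow> real)                                  \<comment> \<open>V_A*\<close>
   \<Rightarrow> (real \<times> real \<Rightarrow> real \<Rightarrow> real \<Rightarrow> real)                  \<comment> \<open>W_R*\<close>
   \<Rightarrow> (real \<Rightarrow> real)                                          \<comment> \<open>W_A*\<close>
   \<Rightarrow> (real \<times> real \<Rightarrow> real \<Rightarrow> real)                          \<comment> \<open>Gamma\<close>
   \<Rightarrow> bool" where
  "recursive_equilibrium e q cs Bst cL bs mR mA ds VR VA WR WA Gam \<longleftrightarrow>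
     \<comment> \<open>price function and perceived law of motion have the right ranges\<close>
     (\<forall>y\<in>Ys e. \<forall>B\<in>Bs e. q y B \<ge> 0) \<and>
     (\<forall>w\<in>Wset e. \<forall>B\<in>Bs e. Gam w B \<in> Bs e) \<and>
     \<comment> \<open>expectations over X are well defined\<close>
     (\<forall>y'\<in>Ys e. \<forall>B'\<in>Bs e \<union> {0}.
        integrable (MX e) (\<lambda>x. Vfun e VR VA (x, y') B') \<and>
        integrable (MX e) (\<lambda>x. VA (x, y')) \<and>
        (\<forall>b'\<in>Bs e \<union> {0}. integrable (MX e) (\<lambda>x. Wfun ds WR WA (x, y') B' b'))) \<and>
     \<comment> \<open>(1a) borrower's repayment problem and default decision\<close>
     (\<forall>w\<in>Wset e. \<forall>B\<in>Bs e.
        Bst w B \<in> Bs e \<and>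
        cs w B = cons e q w B (Bst w B) \<and> cs w B > 0 \<and>
        VR w B = u e (cs w B) + beta e * condE e (\<lambda>w'. Vfun e VR VA w' (Bst w B)) w \<and>
        (\<forall>B'\<in>Bs e. cons e q w B B' > 0 \<longrightarrow>
           u e (cons e q w B B') + beta e * condE e (\<lambda>w'. Vfun e VR VA w' B') w \<le> VR w B) \<and>
        ds w B = (if VR w B \<ge> VA (xlo e, snd w) then 1 else 0)) \<and>
     \<comment> \<open>(1b) borrower's autarky value\<close>
     (\<forall>w\<in>Wset e.
        VA w = u e (snd w + fst w - phi e (snd w))
               + beta e * condE e (\<lambda>w'. (1 - pii e) * VA w' + pii e * Vfun e VR VA w' 0) w) \<and>
     \<comment> \<open>(1c) lender's problem in repayment: W_R = min_m max_{b'} J, attained at (m_R*, b*)\<close>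
     (\<forall>w\<in>Wset e. \<forall>B\<in>Bs e. \<forall>b\<in>Bs e.
        bs w B b \<in> Bs e \<and> mR w B b \<in> Ment e \<and>
        cL w B b = consL e q Gam w B b (bs w B b) \<and>
        ereal (WR w B b) = JR e q Gam ds WR WA w B b (mR w B b) (bs w B b) \<and>
        (\<forall>b'\<in>Bs e. JR e q Gam ds WR WA w B b (mR w B b) b'
                     \<le> JR e q Gam ds WR WA w B b (mR w B b) (bs w B b)) \<and>
        (\<forall>m\<in>Ment e. ereal (WR w B b) \<le> (SUP b'\<in>Bs e. JR e q Gam ds WR WA w B b m b'))) \<and>
     \<comment> \<open>(1d) lender's value when the borrower is in autarky\<close>
     (\<forall>y\<in>Ys e.
        mA y \<in> Ment e \<and>
        ereal (WA y) = JA e ds WR WA y (mA y) \<and>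
        (\<forall>m\<in>Ment e. JA e ds WR WA y (mA y) \<le> JA e ds WR WA y m)) \<and>
     \<comment> \<open>(2) market clearing\<close>
     (\<forall>w\<in>Wset e. \<forall>B\<in>Bs e. Bst w B = bs w B B) \<and>
     \<comment> \<open>(3) consistency of the perceived law of motion\<close>
     (\<forall>w\<in>Wset e. \<forall>B\<in>Bs e. Bst w B = Gam w B)"

end

theory Submission
  imports Defs
begin

lemma expx_shift:
  assumes ps: "prob_space M" and int: "integrable M f"
  shows "integral\<^sup>L M (\<lambda>x. f x + k) = integral\<^sup>L M f + (k::real)"
proof -
  interpret prob_space M by (rule ps)
  have "integrable M (\<lambda>x. k)" by simp
  then have "integral\<^sup>L M (\<lambda>x. f x + k) = integral\<^sup>L M f + integral\<^sup>L M (\<lambda>x. k)"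
    using int by simp
  also have "integral\<^sup>L M (\<lambda>x. k) = k" by (simp add: prob_space)
  finally show ?thesis .
qed

lemma int_shift:
  assumes ps: "prob_space M" and int: "integrable M f"
  shows "integrable M (\<lambda>x. f x + (k::real))"
proof -
  interpret prob_space M by (rule ps)
  show ?thesis using int by simp
qed

lemma ereal_shift: "ereal (a + d) + T + ereal (g + h) = (ereal a + T + ereal g) + ereal (d + h)"
  by (cases T) (auto simp: algebra_simps)

lemma wfun_shift: "Wfun ds (\<lambda>w B b. WR w B b + k) (\<lambda>y. WA y + k) w B b = Wfun ds WR WA w B b + k"
  by (simp add: Wfun_def algebra_simps)

lemma expY_shift:
  assumes "m \<in> Ment e" "y \<in> Ys e"
  shows "ExpY e (\<lambda>y'. m y' * (f y' + k)) y = ExpY e (\<lambda>y'. m y' * f y') y + k"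
proof -
  have s: "(\<Sum>y'\<in>Ys e. m y' * P e y y') = 1" using assms by (simp add: Ment_def)
  have "ExpY e (\<lambda>y'. m y' * (f y' + k)) y = (\<Sum>y'\<in>Ys e. P e y y' * (m y' * f y') + k * (m y' * P e y y'))"
    by (simp add: ExpY_def algebra_simps)
  also have "\<dots> = ExpY e (\<lambda>y'. m y' * f y') y + k * (\<Sum>y'\<in>Ys e. m y' * P e y y')"
    by (simp add: ExpY_def sum.distrib sum_distrib_left)
  finally show ?thesis using s by simp
qed

theorem lemma1:
  fixes e :: economy and zhat :: real
    and q :: "real \<Rightarrow> real \<Rightarrow> real"
    and cs Bst ds VR Gam :: "real \<times> real \<Rightarrow> real \<Rightarrow> real"
    and cL bs WR :: "real \<times> real \<Rightarrow> real \<Rightarrow> real \<Rightarrow> real"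
    and mR :: "real \<times> real \<Rightarrow> real \<Rightarrow> real \<Rightarrow> (real \<Rightarrow> real)"
    and mA :: "real \<Rightarrow> (real \<Rightarrow> real)"
    and VA :: "real \<times> real \<Rightarrow> real"
    and WA :: "real \<Rightarrow> real"
  assumes "economy_ok e"
    and "recursive_equilibrium e q cs Bst cL bs mR mA ds VR VA WR WA Gam"
    and "zhat \<noteq> zbar e"
  shows "\<exists>cL' bs' mR' mA' VR' VA' WR' WA' Gam'.
           recursive_equilibrium (e\<lparr>zbar := zhat\<rparr>) q cs Bst cL' bs' mR' mA' ds VR' VA' WR' WA' Gam'"
proof -
  define e' where "e' = e\<lparr>zbar := zhat\<rparr>"
  define d where "d = zhat - zbar e"
  define k where "k = d / (1 - gam e)"
  have gam: "gam e < 1" using assms(1) by (simp add: economy_ok_def)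
  have kk: "d + gam e * k = k" using gam unfolding k_def by (simp add: field_simps)
  have ps: "prob_space (MX e)" using assms(1) by (simp add: economy_ok_def)
  define WR' where "WR' = (\<lambda>w B b. WR w B b + k)"
  define WA' where "WA' = (\<lambda>y. WA y + k)"
  define cL' where "cL' = (\<lambda>w B b. consL e' q Gam w B b (bs w B b))"
  have eqs: "Ys e' = Ys e" "Bs e' = Bs e" "MX e' = MX e" "Wset e' = Wset e" "Ment e' = Ment e"
    "lam e' = lam e" "psi e' = psi e" "u e' = u e" "beta e' = beta e" "phi e' = phi e"
    "xlo e' = xlo e" "pii e' = pii e" "gam e' = gam e" "theta e' = theta e" "zbar e' = zbar e + d" "P e' = P e"
    by (simp_all add: e'_def MX_def Wset_def Ment_def d_def)
  have eqf: "ExpY e' = ExpY e" "ExpX e' = ExpX e" "condE e' = condE e" "ent e' = ent e"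
    "Vfun e' = Vfun e" "cons e' = cons e"
    by (simp_all add: fun_eq_iff ExpY_def ExpX_def condE_def ent_def Vfun_def cons_def eqs)
  have consL': "consL e' q Gam w B b b' = consL e q Gam w B b b' + d" for w B b b'
    by (simp add: consL_def eqs)
  note RE = assms(2)[unfolded recursive_equilibrium_def]
  have intW: "integrable (MX e) (\<lambda>x. Wfun ds WR WA (x, y') B' b')"
    if "y' \<in> Ys e" "B' \<in> Bs e \<union> {0}" "b' \<in> Bs e \<union> {0}" for y' B' b'
    using RE that by blast
  have calW': "calW e' ds WR' WA' y' B' b' = calW e ds WR WA y' B' b' + k"
    if "y' \<in> Ys e" "B' \<in> Bs e \<union> {0}" "b' \<in> Bs e \<union> {0}" for y' B' b'
    unfolding calW_def eqf WR'_def WA'_def wfun_shift ExpX_def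
    using expx_shift[OF ps intW[OF that]] by simp
  have snd_w: "snd w \<in> Ys e" if "w \<in> Wset e" for w using that by (auto simp: Wset_def)
  have JR': "JR e' q Gam ds WR' WA' w B b m b' = JR e q Gam ds WR WA w B b m b' + ereal k"
    if w: "w \<in> Wset e" and G: "Gam w B \<in> Bs e" and m: "m \<in> Ment e" and b': "b' \<in> Bs e" for w B b m b'
  proof -
    have "ExpY e (\<lambda>y'. m y' * calW e' ds WR' WA' y' (Gam w B) b') (snd w)
        = ExpY e (\<lambda>y'. m y' * (calW e ds WR WA y' (Gam w B) b' + k)) (snd w)"
      unfolding ExpY_def by (rule sum.cong) (use G b' calW' in auto)
    also have "\<dots> = ExpY e (\<lambda>y'. m y' * calW e ds WR WA y' (Gam w B) b') (snd w) + k"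
      by (rule expY_shift[OF m snd_w[OF w]])
    finally have E: "ExpY e (\<lambda>y'. m y' * calW e' ds WR' WA' y' (Gam w B) b') (snd w)
        = ExpY e (\<lambda>y'. m y' * calW e ds WR WA y' (Gam w B) b') (snd w) + k" .
    show ?thesis unfolding JR_def E consL' eqs eqf
      using ereal_shift[of "consL e q Gam w B b b'" d "theta e * ereal (gam e * ent e m (snd w))"
          "gam e * ExpY e (\<lambda>y'. m y' * calW e ds WR WA y' (Gam w B) b') (snd w)" "gam e * k"]
      by (simp add: distrib_left kk)
  qed
  have JA': "JA e' ds WR' WA' y m = JA e ds WR WA y m + ereal k"
    if y: "y \<in> Ys e" and m: "m \<in> Ment e" for y m
  proof -
    have "ExpY e (\<lambda>y'. m y' * ((1 - pii e) * WA' y' + pii e * calW e' ds WR' WA' y' 0 0)) y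
        = ExpY e (\<lambda>y'. m y' * (((1 - pii e) * WA y' + pii e * calW e ds WR WA y' 0 0) + k)) y"
      unfolding ExpY_def by (rule sum.cong) (simp_all add: calW', simp add: WA'_def algebra_simps)
    also have "\<dots> = ExpY e (\<lambda>y'. m y' * ((1 - pii e) * WA y' + pii e * calW e ds WR WA y' 0 0)) y + k"
      by (rule expY_shift[OF m y])
    finally have E: "ExpY e (\<lambda>y'. m y' * ((1 - pii e) * WA' y' + pii e * calW e' ds WR' WA' y' 0 0)) y
        = ExpY e (\<lambda>y'. m y' * ((1 - pii e) * WA y' + pii e * calW e ds WR WA y' 0 0)) y + k" .
    show ?thesis unfolding JA_def E eqs eqf
      using ereal_shift[of "zbar e" d "theta e * ereal (gam e * ent e m y)"
          "gam e * ExpY e (\<lambda>y'. m y' * ((1 - pii e) * WA y' + pii e * calW e ds WR WA y' 0 0)) y" "gam e * k"]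
      by (simp add: distrib_left kk)
  qed
  have "recursive_equilibrium e' q cs Bst cL' bs mR mA ds VR VA WR' WA' Gam"
    unfolding recursive_equilibrium_def eqs eqf
  proof (intro conjI)
    show "\<forall>y\<in>Ys e. \<forall>B\<in>Bs e. 0 \<le> q y B" using RE by (elim conjE) assumption
    show "\<forall>w\<in>Wset e. \<forall>B\<in>Bs e. Gam w B \<in> Bs e" using RE by (elim conjE) assumption
    show "\<forall>y'\<in>Ys e. \<forall>B'\<in>Bs e \<union> {0}. integrable (MX e) (\<lambda>x. Vfun e VR VA (x, y') B') \<and>
        integrable (MX e) (\<lambda>x. VA (x, y')) \<and>
        (\<forall>b'\<in>Bs e \<union> {0}. integrable (MX e) (\<lambda>x. Wfun ds WR' WA' (x, y') B' b'))"
    proof (intro ballI conjI)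
      fix y' B' b' assume a: "y' \<in> Ys e" "B' \<in> Bs e \<union> {0}"
      have R: "integrable (MX e) (\<lambda>x. Vfun e VR VA (x, y') B') \<and>
        integrable (MX e) (\<lambda>x. VA (x, y'))" using RE a by blast
      show "integrable (MX e) (\<lambda>x. Vfun e VR VA (x, y') B')" "integrable (MX e) (\<lambda>x. VA (x, y'))"
        using R by auto
      assume "b' \<in> Bs e \<union> {0}"
      then show "integrable (MX e) (\<lambda>x. Wfun ds WR' WA' (x, y') B' b')"
        unfolding WR'_def WA'_def wfun_shift using int_shift[OF ps intW] a by blast
    qed
    show "\<forall>w\<in>Wset e. \<forall>B\<in>Bs e. Bst w B \<in> Bs e \<and> cs w B = cons e q w B (Bst w B) \<and> 0 < cs w B \<and>
        VR w B = u e (cs w B) + beta e * condE e (\<lambda>w'. Vfun e VR VA w' (Bst w B)) w \<and>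
        (\<forall>B'\<in>Bs e. 0 < cons e q w B B' \<longrightarrow>
           u e (cons e q w B B') + beta e * condE e (\<lambda>w'. Vfun e VR VA w' B') w \<le> VR w B) \<and>
        ds w B = (if VA (xlo e, snd w) \<le> VR w B then 1 else 0)"
      using RE by (elim conjE) assumption
    show "\<forall>w\<in>Wset e. VA w = u e (snd w + fst w - phi e (snd w)) +
        beta e * condE e (\<lambda>w'. (1 - pii e) * VA w' + pii e * Vfun e VR VA w' 0) w"
      using RE by (elim conjE) assumption
    show "\<forall>w\<in>Wset e. \<forall>B\<in>Bs e. \<forall>b\<in>Bs e. bs w B b \<in> Bs e \<and> mR w B b \<in> Ment e \<and>
        cL' w B b = consL e' q Gam w B b (bs w B b) \<and>
        ereal (WR' w B b) = JR e' q Gam ds WR' WA' w B b (mR w B b) (bs w B b) \<and>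
        (\<forall>b'\<in>Bs e. JR e' q Gam ds WR' WA' w B b (mR w B b) b'
             \<le> JR e' q Gam ds WR' WA' w B b (mR w B b) (bs w B b)) \<and>
        (\<forall>m\<in>Ment e. ereal (WR' w B b) \<le> (SUP b'\<in>Bs e. JR e' q Gam ds WR' WA' w B b m b'))"
    proof (intro ballI conjI)
      fix w B b assume w: "w \<in> Wset e" and B: "B \<in> Bs e" and b: "b \<in> Bs e"
      have G: "Gam w B \<in> Bs e" using RE w B by blast
      have R: "bs w B b \<in> Bs e \<and> mR w B b \<in> Ment e \<and>
        ereal (WR w B b) = JR e q Gam ds WR WA w B b (mR w B b) (bs w B b) \<and>
        (\<forall>b'\<in>Bs e. JR e q Gam ds WR WA w B b (mR w B b) b'
                     \<le> JR e q Gam ds WR WA w B b (mR w B b) (bs w B b)) \<and>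
        (\<forall>m\<in>Ment e. ereal (WR w B b) \<le> (SUP b'\<in>Bs e. JR e q Gam ds WR WA w B b m b'))"
        using RE w B b by blast
      show "bs w B b \<in> Bs e" "mR w B b \<in> Ment e" using R by auto
      show "cL' w B b = consL e' q Gam w B b (bs w B b)" by (simp add: cL'_def)
      show "ereal (WR' w B b) = JR e' q Gam ds WR' WA' w B b (mR w B b) (bs w B b)"
      proof -
        have "ereal (WR' w B b) = ereal (WR w B b) + ereal k" by (simp add: WR'_def)
        also have "\<dots> = JR e q Gam ds WR WA w B b (mR w B b) (bs w B b) + ereal k" using R by simp
        also have "\<dots> = JR e' q Gam ds WR' WA' w B b (mR w B b) (bs w B b)"
          using JR'[OF w G] R by simp
        finally show ?thesis .
      qed
      show "JR e' q Gam ds WR' WA' w B b (mR w B b) b'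
             \<le> JR e' q Gam ds WR' WA' w B b (mR w B b) (bs w B b)" if b': "b' \<in> Bs e" for b'
        using R JR'[OF w G] b' by (auto intro: add_right_mono)
      show "ereal (WR' w B b) \<le> (SUP b'\<in>Bs e. JR e' q Gam ds WR' WA' w B b m b')"
        if m: "m \<in> Ment e" for m
      proof -
        have "(SUP b'\<in>Bs e. JR e' q Gam ds WR' WA' w B b m b')
            = (SUP b'\<in>Bs e. JR e q Gam ds WR WA w B b m b' + ereal k)"
          by (rule SUP_cong) (use JR'[OF w G m] in auto)
        also have "\<dots> = (SUP b'\<in>Bs e. JR e q Gam ds WR WA w B b m b') + ereal k"
          using B by (intro SUP_ereal_add_left) auto
        finally have S: "(SUP b'\<in>Bs e. JR e' q Gam ds WR' WA' w B b m b')
            = (SUP b'\<in>Bs e. JR e q Gam ds WR WA w B b m b') + ereal k" .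
        have "ereal (WR w B b) \<le> (SUP b'\<in>Bs e. JR e q Gam ds WR WA w B b m b')" using R m by blast
        then have "ereal (WR w B b) + ereal k \<le> (SUP b'\<in>Bs e. JR e q Gam ds WR WA w B b m b') + ereal k"
          by (rule add_right_mono)
        then show ?thesis unfolding S by (simp add: WR'_def)
      qed
    qed
    show "\<forall>y\<in>Ys e. mA y \<in> Ment e \<and> ereal (WA' y) = JA e' ds WR' WA' y (mA y) \<and>
        (\<forall>m\<in>Ment e. JA e' ds WR' WA' y (mA y) \<le> JA e' ds WR' WA' y m)"
    proof (intro ballI conjI)
      fix y assume y: "y \<in> Ys e"
      have R: "mA y \<in> Ment e \<and> ereal (WA y) = JA e ds WR WA y (mA y) \<and>
        (\<forall>m\<in>Ment e. JA e ds WR WA y (mA y) \<le> JA e ds WR WA y m)" using RE y by blast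
      show "mA y \<in> Ment e" using R by auto
      show "ereal (WA' y) = JA e' ds WR' WA' y (mA y)" 
      proof -
        have "ereal (WA' y) = ereal (WA y) + ereal k" by (simp add: WA'_def)
        also have "\<dots> = JA e ds WR WA y (mA y) + ereal k" using R by simp
        also have "\<dots> = JA e' ds WR' WA' y (mA y)" using JA'[OF y] R by simp
        finally show ?thesis .
      qed
      show "JA e' ds WR' WA' y (mA y) \<le> JA e' ds WR' WA' y m" if m: "m \<in> Ment e" for m
        using R JA'[OF y] m by (auto intro: add_right_mono)
    qed
    show "\<forall>w\<in>Wset e. \<forall>B\<in>Bs e. Bst w B = bs w B B" using RE by (elim conjE) assumption
    show "\<forall>w\<in>Wset e. \<forall>B\<in>Bs e. Bst w B = Gam w B" using RE by (elim conjE) assumption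
  qed
  then show ?thesis unfolding e'_def by blast
qed

end
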